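(* Let $\alpha>0$, $0<q<\infty$, $r>0$, let $\mu$ be a positive Borel measure on $\mathbb{C}$, and let $\{a_k\}_{k=1}^\infty$ be an $r$-lattice of $\mathbb{C}$. The following are equivalent: (1) $\mu$ is an $(\infty,q)$ Fock-Carleson measure; (2) $\tilde{\mu}_t\in L^1(\mathbb{C},dA)$ for every $t>0$; (3) the function $z\mapsto\mu(B(z,r))$ belongs to $L^1(\mathbb{C},dA)$; (4) $\{\mu(B(a_k,r))\}_{k\ge1}\in \ell^1$.
   Context: $dA$ is area measure on $\mathbb{C}$, $B(z,r)$ is the open disc of center $z$ and radius $r$. $F^\infty_\alpha$ is the space of entire functions $f$ with $\|f\|_{\infty,\alpha}=\sup_{z}|f(z)|e^{-\alpha|z|^2/2}<\infty$. $\mu$ is an $(\infty,q)$ Fock-Carleson measure if there is $C>0$ with $\left[\int_{\mathbb{C}}|f(z)e^{-\alpha|z|^2/2}|^q\,d\mu(z)\right]^{1/q}\le C\|f\|_{\infty,\alpha}$ for all $f\in F^\infty_\alpha$. For $t>0$, the $t$-Berezin transform of $\mu$ is $\tilde{\mu}_t(z)=\frac{\alpha}{\pi}\int_{\mathbb{C}}e^{-\alpha t|z-w|^2/2}\,d\mu(w)$. A sequence $\{a_k\}$ in $\mathbb{C}$ is an $r$-lattice if $\mathbb{C}=\bigcup_k B(a_k,r)$ and the discs $B(a_k,r/2)$ are pairwise disjoint. *)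

theory Defs
  imports "HOL-Analysis.Analysis"
begin

definition fock_inf :: "real \<Rightarrow> (complex \<Rightarrow> complex) set" where
  "fock_inf \<alpha> = {f. f holomorphic_on UNIV \<and>
      bdd_above (range (\<lambda>z. norm (f z) * exp (- \<alpha> * (cmod z)^2 / 2)))}"

definition fock_inf_norm :: "real \<Rightarrow> (complex \<Rightarrow> complex) \<Rightarrow> real" where
  "fock_inf_norm \<alpha> f = (SUP z. norm (f z) * exp (- \<alpha> * (cmod z)^2 / 2))"

definition fock_carleson_inf :: "real \<Rightarrow> real \<Rightarrow> complex measure \<Rightarrow> bool" where
  "fock_carleson_inf \<alpha> q \<mu> \<longleftrightarrow> (\<exists>C>0. \<forall>f\<in>fock_inf \<alpha>.
      (\<integral>\<^sup>+ z. ennreal ((norm (f z) * exp (- \<alpha> * (cmod z)^2 / 2)) powr q) \<partial>\<mu>) < \<infinity> \<and>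
      (enn2real (\<integral>\<^sup>+ z. ennreal ((norm (f z) * exp (- \<alpha> * (cmod z)^2 / 2)) powr q) \<partial>\<mu>))
         powr (1 / q) \<le> C * fock_inf_norm \<alpha> f)"

definition berezin :: "real \<Rightarrow> real \<Rightarrow> complex measure \<Rightarrow> complex \<Rightarrow> ennreal" where
  "berezin \<alpha> t \<mu> z = ennreal (\<alpha> / pi) *
      (\<integral>\<^sup>+ w. ennreal (exp (- \<alpha> * t * (cmod (z - w))^2 / 2)) \<partial>\<mu>)"

definition r_lattice :: "real \<Rightarrow> (nat \<Rightarrow> complex) \<Rightarrow> bool" where
  "r_lattice r a \<longleftrightarrow> (\<Union>k. ball (a k) r) = UNIV \<and>
      (\<forall>j k. j \<noteq> k \<longrightarrow> ball (a j) (r/2) \<inter> ball (a k) (r/2) = {})"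

end

theory Submission
  imports Defs "HOL-Probability.Probability"
begin


lemma space_mu: "sets \<mu> = sets (borel::complex measure) \<Longrightarrow> space \<mu> = UNIV"
  using sets_eq_imp_space_eq by fastforce

lemma mu_ball_meas:
  fixes \<mu> :: "complex measure"
  assumes S: "sets \<mu> = sets borel"
  shows "(\<lambda>z. emeasure \<mu> (ball z r)) \<in> borel_measurable borel"
proof (rule borel_measurableI_greater)
  fix y :: ennreal
  have "open {x. y < emeasure \<mu> (ball x r)}"
  proof (rule openI)
    fix z assume "z \<in> {x. y < emeasure \<mu> (ball x r)}"
    hence yz: "y < emeasure \<mu> (ball z r)" by simp
    define A where "A = (\<lambda>n::nat. ball z (r * (real n + 1) / (real n + 2)))"
    have rpos: "r > 0" using yz by (cases "r > 0") (auto simp: ball_empty)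
    have inc: "incseq A" unfolding A_def
    proof (rule incseq_SucI)
      fix n :: nat
      have "(real n + 1) / (real n + 2) \<le> (real (Suc n) + 1) / (real (Suc n) + 2)"
        by (simp add: field_simps)
      hence "r * (real n + 1) / (real n + 2) \<le> r * (real (Suc n) + 1) / (real (Suc n) + 2)"
        using rpos by (metis mult_left_mono less_imp_le times_divide_eq_right)
      thus "ball z (r * (real n + 1) / (real n + 2)) \<subseteq> ball z (r * (real (Suc n) + 1) / (real (Suc n) + 2))"
        by (rule subset_ball)
    qed
    have U: "(\<Union>n. A n) = ball z r"
    proof
      show "(\<Union>n. A n) \<subseteq> ball z r" unfolding A_def
        by (rule UN_least, rule subset_ball) (use rpos in \<open>simp add: field_simps\<close>)
      show "ball z r \<subseteq> (\<Union>n. A n)"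
      proof
        fix w assume "w \<in> ball z r"
        hence d: "dist z w < r" by simp
        have "((\<lambda>n. r * (real n + 1) / (real n + 2)) \<longlongrightarrow> r * 1) sequentially"
        proof -
          have "((\<lambda>n. (real n + 1) / (real n + 2)) \<longlongrightarrow> 1) sequentially"
            by real_asymp
          from tendsto_mult_left[OF this, of r] show ?thesis by simp
        qed
        hence "\<forall>\<^sub>F n in sequentially. dist z w < r * (real n + 1) / (real n + 2)"
          using d by (intro order_tendstoD) auto
        then obtain N where "\<forall>n\<ge>N. dist z w < r * (real n + 1) / (real n + 2)"
          unfolding eventually_sequentially by blast
        hence "dist z w < r * (real N + 1) / (real N + 2)" by (meson order_refl)
        hence "w \<in> A N" by (simp add: A_def)
        thus "w \<in> (\<Union>n. A n)" by blast
      qed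
    qed
    have "(SUP n. emeasure \<mu> (A n)) = emeasure \<mu> (\<Union>n. A n)"
    proof (rule SUP_emeasure_incseq[OF _ inc])
      show "range A \<subseteq> sets \<mu>" unfolding S A_def by auto
    qed
    with yz U have "y < (SUP n. emeasure \<mu> (A n))" by simp
    then obtain n where n: "y < emeasure \<mu> (A n)" by (auto simp: less_SUP_iff)
    define \<delta> where "\<delta> = r / (real n + 2)"
    have dpos: "\<delta> > 0" using rpos by (simp add: \<delta>_def)
    have "ball z \<delta> \<subseteq> {x. y < emeasure \<mu> (ball x r)}"
    proof
      fix z' assume z': "z' \<in> ball z \<delta>"
      have "A n \<subseteq> ball z' r"
      proof
        fix w assume "w \<in> A n"
        hence "dist z w < r * (real n + 1) / (real n + 2)" by (simp add: A_def)
        moreover have "dist z' w \<le> dist z z' + dist z w" using dist_triangle[of z' w z] by (simp add: dist_commute)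
        moreover have "dist z z' < \<delta>" using z' by simp
        moreover have "r * (real n + 1) / (real n + 2) + \<delta> = r"
        proof -
          have "r * (real n + 1) / (real n + 2) + \<delta> = (r * (real n + 1) + r) / (real n + 2)"
            by (simp add: \<delta>_def add_divide_distrib)
          also have "\<dots> = r * (real n + 2) / (real n + 2)" by (simp add: algebra_simps)
          also have "\<dots> = r" by simp
          finally show ?thesis .
        qed
        ultimately have "dist z' w < r" by linarith
        thus "w \<in> ball z' r" by simp
      qed
      hence "emeasure \<mu> (A n) \<le> emeasure \<mu> (ball z' r)"
        using S by (intro emeasure_mono) auto
      with n show "z' \<in> {x. y < emeasure \<mu> (ball x r)}" by simp
    qed
    thus "\<exists>e>0. ball z e \<subseteq> {x. y < emeasure \<mu> (ball x r)}" using dpos by blast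
  qed
  thus "{x \<in> space borel. y < emeasure \<mu> (ball x r)} \<in> sets borel" by simp
qed



definition A1 :: real where "A1 = measure lborel (ball (0::complex) 1)"

lemma A1_pos: "A1 > 0" unfolding A1_def by (rule content_ball_pos) simp

lemma ball_area: "r \<ge> 0 \<Longrightarrow> emeasure lborel (ball (c::complex) r) = ennreal (r^2 * A1)"
proof -
  assume r: "r \<ge> 0"
  have "emeasure lborel (ball c r) = ennreal (measure lborel (ball c r))"
    using emeasure_lborel_ball_finite[of c r] by (subst emeasure_eq_ennreal_measure) auto
  also have "measure lborel (ball c r) = r^2 * A1"
    using content_ball_conv_unit_ball[OF r, of c] by (simp add: A1_def)
  finally show ?thesis .
qed

lemma meas_dist_ind:
  fixes \<mu> :: "complex measure"
  assumes S: "sets \<mu> = sets borel"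
  shows "(\<lambda>(z,w). indicator {p::complex\<times>complex. dist (fst p) (snd p) < r} (z,w) :: ennreal)
           \<in> borel_measurable (lborel \<Otimes>\<^sub>M \<mu>)"
proof -
  let ?X = "{p::complex\<times>complex. dist (fst p) (snd p) < r}"
  have o: "open ?X"
    by (intro open_Collect_less continuous_intros)
  have m: "(indicator ?X :: _ \<Rightarrow> ennreal) \<in> borel_measurable borel"
    using o by (intro borel_measurable_indicator) (rule borel_open)
  have s1: "sets (lborel \<Otimes>\<^sub>M \<mu>) = sets (borel \<Otimes>\<^sub>M (borel :: complex measure))"
    by (rule sets_pair_measure_cong[OF sets_lborel S])
  have s2: "sets (lborel \<Otimes>\<^sub>M \<mu>) = sets (borel :: (complex\<times>complex) measure)"
    using s1 by (simp only: borel_prod)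
  have eq: "(\<lambda>(z,w). indicator ?X (z,w) :: ennreal) = indicator ?X" by (auto simp: fun_eq_iff)
  show ?thesis unfolding eq using m measurable_cong_sets[OF s2 refl] by blast
qed

lemma tonelli_balls:
  fixes \<mu> :: "complex measure"
  assumes S: "sets \<mu> = sets borel" and sf: "sigma_finite_measure \<mu>" and r: "r \<ge> 0"
  shows "(\<integral>\<^sup>+ z. emeasure \<mu> (ball z r) \<partial>lborel) = ennreal (r^2 * A1) * emeasure \<mu> UNIV"
proof -
  interpret pair_sigma_finite lborel \<mu>
    by (intro pair_sigma_finite.intro sf) (rule lborel.sigma_finite_measure_axioms)
  have sp: "space \<mu> = UNIV" using sets_eq_imp_space_eq[OF S] by simp
  let ?g = "\<lambda>z w. indicator {p::complex\<times>complex. dist (fst p) (snd p) < r} (z,w) :: ennreal"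
  have e1: "emeasure \<mu> (ball z r) = (\<integral>\<^sup>+ w. ?g z w \<partial>\<mu>)" for z
  proof -
    have "(\<lambda>w. ?g z w) = indicator (ball z r)" by (auto simp: indicator_def fun_eq_iff)
    thus ?thesis using S by simp
  qed
  have e2: "(\<integral>\<^sup>+ z. ?g z w \<partial>lborel) = ennreal (r^2 * A1)" for w
  proof -
    have "(\<lambda>z. ?g z w) = indicator (ball w r)" by (auto simp: indicator_def fun_eq_iff dist_commute)
    thus ?thesis using ball_area[OF r] by simp
  qed
  have "(\<integral>\<^sup>+ z. emeasure \<mu> (ball z r) \<partial>lborel) = (\<integral>\<^sup>+ z. (\<integral>\<^sup>+ w. ?g z w \<partial>\<mu>) \<partial>lborel)"
    by (simp add: e1)
  also have "\<dots> = (\<integral>\<^sup>+ w. (\<integral>\<^sup>+ z. ?g z w \<partial>lborel) \<partial>\<mu>)"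
    by (rule Fubini'[symmetric]) (rule meas_dist_ind[OF S])
  also have "\<dots> = ennreal (r^2 * A1) * emeasure \<mu> UNIV" by (simp add: e2 sp)
  finally show ?thesis .
qed

lemma balls_imp_finite:
  fixes \<mu> :: "complex measure"
  assumes S: "sets \<mu> = sets borel" and r: "r > 0"
    and fin: "(\<integral>\<^sup>+ z. emeasure \<mu> (ball z r) \<partial>lborel) < \<infinity>"
  shows "emeasure \<mu> UNIV < \<infinity>"
proof -
  have loc: "emeasure \<mu> (ball p (r/2)) < \<infinity>" for p
  proof (rule ccontr)
    assume "\<not> ?thesis"
    hence inf: "emeasure \<mu> (ball p (r/2)) = \<infinity>" by (simp add: less_top[symmetric])
    have "\<infinity> * indicator (ball p (r/2)) z \<le> emeasure \<mu> (ball z r)" for z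
    proof (cases "z \<in> ball p (r/2)")
      case True
      have "ball p (r/2) \<subseteq> ball z r"
      proof
        fix x assume "x \<in> ball p (r/2)"
        hence "dist p x < r/2" by simp
        moreover have "dist z p < r/2" using True by (simp add: dist_commute)
        moreover have "dist z x \<le> dist z p + dist p x" by (rule dist_triangle)
        ultimately have "dist z x < r" by linarith
        thus "x \<in> ball z r" by simp
      qed
      hence "emeasure \<mu> (ball p (r/2)) \<le> emeasure \<mu> (ball z r)" using S by (intro emeasure_mono) auto
      thus ?thesis using inf True by simp
    qed simp
    hence "(\<integral>\<^sup>+ z. \<infinity> * indicator (ball p (r/2)) z \<partial>lborel) \<le> (\<integral>\<^sup>+ z. emeasure \<mu> (ball z r) \<partial>lborel)"
      by (intro nn_integral_mono) simp
    moreover have "(\<integral>\<^sup>+ z. \<infinity> * indicator (ball p (r/2)) z \<partial>lborel) = \<infinity>"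
    proof -
      have "emeasure lborel (ball p (r/2)) = ennreal ((r/2)^2 * A1)" using r by (intro ball_area) simp
      moreover have "(r/2)^2 * A1 > 0" using r A1_pos by simp
      ultimately show ?thesis by (subst nn_integral_cmult_indicator) (auto simp: ennreal_top_mult)
    qed
    ultimately show False using fin by simp
  qed
  from countable_dense_setE obtain D :: "complex set"
    where D: "countable D" "\<And>X. open X \<Longrightarrow> X \<noteq> {} \<Longrightarrow> \<exists>d\<in>D. d \<in> X"
    by auto
  have sf: "sigma_finite_measure \<mu>"
  proof (unfold sigma_finite_measure_def, intro exI conjI)
    show "countable ((\<lambda>d. ball d (r/2)) ` D)" using D(1) by simp
    show "(\<lambda>d. ball d (r/2)) ` D \<subseteq> sets \<mu>" unfolding S by auto
    show "\<Union> ((\<lambda>d. ball d (r/2)) ` D) = space \<mu>"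
    proof -
      have "z \<in> \<Union> ((\<lambda>d. ball d (r/2)) ` D)" for z
      proof -
        obtain d where "d \<in> D" "d \<in> ball z (r/2)" using D(2)[of "ball z (r/2)"] r by auto
        thus ?thesis by (auto simp: dist_commute)
      qed
      thus ?thesis using sets_eq_imp_space_eq[OF S] by auto
    qed
    show "\<forall>a\<in>(\<lambda>d. ball d (r/2)) ` D. emeasure \<mu> a \<noteq> \<infinity>"
    proof
      fix a assume "a \<in> (\<lambda>d. ball d (r/2)) ` D"
      then obtain d where "a = ball d (r/2)" by blast
      thus "emeasure \<mu> a \<noteq> \<infinity>" using loc[of d] by (simp add: less_top)
    qed
  qed
  have "ennreal (r^2 * A1) * emeasure \<mu> UNIV < \<infinity>"
    using tonelli_balls[OF S sf] r fin by simp
  moreover have "r^2 * A1 > 0" using r A1_pos by simp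
  ultimately show ?thesis by (auto simp: ennreal_mult_less_top)
qed

lemma finite_imp_balls:
  fixes \<mu> :: "complex measure"
  assumes S: "sets \<mu> = sets borel" and r: "r \<ge> 0" and fin: "emeasure \<mu> UNIV < \<infinity>"
  shows "(\<integral>\<^sup>+ z. emeasure \<mu> (ball z r) \<partial>lborel) < \<infinity>"
proof -
  have "finite_measure \<mu>" using fin sets_eq_imp_space_eq[OF S] by (intro finite_measureI) auto
  hence sf: "sigma_finite_measure \<mu>" by (rule finite_measure.axioms)
  show ?thesis using tonelli_balls[OF S sf r] fin by (simp add: ennreal_mult_less_top)
qed



lemma lattice_card:
  assumes L: "r_lattice r a" and r: "r > 0" and F: "finite F" and FK: "F \<subseteq> {k. z \<in> ball (a k) r}"
  shows "card F \<le> 9"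
proof -
  have disj: "disjoint_family_on (\<lambda>k. ball (a k) (r/2)) F"
    using L unfolding r_lattice_def disjoint_family_on_def by blast
  have sub: "(\<Union>k\<in>F. ball (a k) (r/2)) \<subseteq> ball z (3*r/2)"
  proof (intro UN_least subsetI)
    fix k x assume k: "k \<in> F" and x: "x \<in> ball (a k) (r/2)"
    have "dist z (a k) < r" using FK k by (auto simp: dist_commute)
    moreover have "dist (a k) x < r/2" using x by simp
    moreover have "dist z x \<le> dist z (a k) + dist (a k) x" by (rule dist_triangle)
    ultimately have "dist z x < 3*r/2" by linarith
    thus "x \<in> ball z (3*r/2)" by simp
  qed
  have "(\<Sum>k\<in>F. emeasure lborel (ball (a k) (r/2))) = emeasure lborel (\<Union>k\<in>F. ball (a k) (r/2))"
    using disj F by (intro sum_emeasure) auto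
  also have "\<dots> \<le> emeasure lborel (ball z (3*r/2))" using sub by (intro emeasure_mono) auto
  finally have "(\<Sum>k\<in>F. ennreal ((r/2)^2 * A1)) \<le> ennreal ((3*r/2)^2 * A1)"
    using r by (simp add: ball_area)
  hence "ennreal (real (card F) * ((r/2)^2 * A1)) \<le> ennreal ((3*r/2)^2 * A1)"
  proof -
    have "ennreal (real (card F) * ((r/2)^2 * A1)) = ennreal (real (card F)) * ennreal ((r/2)^2 * A1)"
      using A1_pos by (intro ennreal_mult) auto
    thus ?thesis using \<open>(\<Sum>k\<in>F. ennreal ((r/2)^2 * A1)) \<le> ennreal ((3*r/2)^2 * A1)\<close>
      by (simp add: ennreal_of_nat_eq_real_of_nat)
  qed
  hence "real (card F) * ((r/2)^2 * A1) \<le> (3*r/2)^2 * A1"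
    using r A1_pos by (subst (asm) ennreal_le_iff) auto
  hence "real (card F) * ((r/2)^2 * A1) \<le> 9 * ((r/2)^2 * A1)"
    by (simp add: power2_eq_square algebra_simps)
  hence "real (card F) \<le> 9"
    using r A1_pos by (simp add: mult_le_cancel_right)
  thus ?thesis by simp
qed

lemma lattice_sum_le:
  fixes \<mu> :: "complex measure"
  assumes S: "sets \<mu> = sets borel" and L: "r_lattice r a" and r: "r > 0"
  shows "(\<Sum>k. emeasure \<mu> (ball (a k) r)) \<le> 9 * emeasure \<mu> UNIV"
proof -
  have sp: "space \<mu> = UNIV" using sets_eq_imp_space_eq[OF S] by simp
  have pt: "(\<Sum>k. indicator (ball (a k) r) z :: ennreal) \<le> 9" for z
  proof -
    let ?K = "{k. z \<in> ball (a k) r}"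
    have fin: "finite ?K"
    proof (rule ccontr)
      assume "infinite ?K"
      then obtain F where "finite F" "card F = 10" "F \<subseteq> ?K"
        using infinite_arbitrarily_large by blast
      thus False using lattice_card[OF L r] by fastforce
    qed
    have "(\<Sum>k. indicator (ball (a k) r) z :: ennreal) = (\<Sum>k\<in>?K. indicator (ball (a k) r) z)"
      by (rule suminf_finite[OF fin]) auto
    also have "\<dots> = of_nat (card ?K)" by simp
    also have "\<dots> \<le> 9" using lattice_card[OF L r fin order_refl] by simp
    finally show ?thesis .
  qed
  have "(\<Sum>k. emeasure \<mu> (ball (a k) r)) = (\<Sum>k. \<integral>\<^sup>+ z. indicator (ball (a k) r) z \<partial>\<mu>)"
    using S by simp
  also have "\<dots> = (\<integral>\<^sup>+ z. (\<Sum>k. indicator (ball (a k) r) z) \<partial>\<mu>)"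
    by (rule nn_integral_suminf[symmetric]) (simp add: measurable_cong_sets[OF S refl] borel_measurable_indicator)
  also have "\<dots> \<le> (\<integral>\<^sup>+ z. 9 \<partial>\<mu>)" by (intro nn_integral_mono pt)
  also have "\<dots> = 9 * emeasure \<mu> UNIV" by (simp add: sp)
  finally show ?thesis .
qed

lemma lattice_equiv:
  fixes \<mu> :: "complex measure"
  assumes S: "sets \<mu> = sets borel" and L: "r_lattice r a" and r: "r > 0"
  shows "(\<Sum>k. emeasure \<mu> (ball (a k) r)) < \<infinity> \<longleftrightarrow> emeasure \<mu> UNIV < \<infinity>"
proof
  assume "(\<Sum>k. emeasure \<mu> (ball (a k) r)) < \<infinity>"
  moreover have "emeasure \<mu> UNIV \<le> (\<Sum>k. emeasure \<mu> (ball (a k) r))"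
  proof -
    have "UNIV = (\<Union>k. ball (a k) r)" using L unfolding r_lattice_def by simp
    hence "emeasure \<mu> UNIV = emeasure \<mu> (\<Union>k. ball (a k) r)" by simp
    also have "\<dots> \<le> (\<Sum>k. emeasure \<mu> (ball (a k) r))"
      by (rule emeasure_subadditive_countably) (auto simp: S)
    finally show ?thesis .
  qed
  ultimately show "emeasure \<mu> UNIV < \<infinity>" by (rule le_less_trans[rotated])
next
  assume "emeasure \<mu> UNIV < \<infinity>"
  hence "9 * emeasure \<mu> UNIV < \<infinity>" by (simp add: ennreal_mult_less_top)
  thus "(\<Sum>k. emeasure \<mu> (ball (a k) r)) < \<infinity>"
    using lattice_sum_le[OF S L r] by (rule le_less_trans[rotated])
qed



lemma gauss1_finite:
  assumes c: "c > 0"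
  shows "(\<integral>\<^sup>+ x. ennreal (exp (- c * (x::real)^2)) \<partial>lborel) < \<infinity>"
proof -
  define \<sigma> where "\<sigma> = 1 / sqrt (2 * c)"
  have s: "\<sigma> > 0" using c by (simp add: \<sigma>_def)
  have s2: "\<sigma>^2 = 1 / (2*c)" using c by (simp add: \<sigma>_def power_divide)
  define K where "K = sqrt (2 * pi * \<sigma>^2)"
  have K: "K > 0" using s by (simp add: K_def)
  have eq: "exp (- c * x^2) = K * normal_density 0 \<sigma> x" for x
  proof -
    have "K * normal_density 0 \<sigma> x = exp ((- ((x - 0)^2)) / (2 * \<sigma>^2))"
      using K s by (simp add: normal_density_def K_def)
    also have "(- ((x - 0)^2)) / (2 * \<sigma>^2) = - c * x^2" using c by (simp add: s2)
    finally show ?thesis by simp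
  qed
  have "(\<integral>\<^sup>+ x. ennreal (normal_density 0 \<sigma> x) \<partial>lborel) < \<infinity>"
  proof -
    have a: "(\<integral>\<^sup>+ x. ennreal (norm (normal_density 0 \<sigma> x)) \<partial>lborel) < \<infinity>"
      using integrable_iff_bounded[THEN iffD1, OF integrable_normal_density[of \<sigma> 0, OF s]] by blast
    have b: "(\<lambda>x. ennreal (norm (normal_density 0 \<sigma> x))) = (\<lambda>x. ennreal (normal_density 0 \<sigma> x))"
      by simp
    show ?thesis using a unfolding b .
  qed
  moreover have "(\<integral>\<^sup>+ x. ennreal (exp (- c * (x::real)^2)) \<partial>lborel)
      = ennreal K * (\<integral>\<^sup>+ x. ennreal (normal_density 0 \<sigma> x) \<partial>lborel)"
  proof -
    have "(\<lambda>x. ennreal (exp (- c * x^2))) = (\<lambda>x. ennreal K * ennreal (normal_density 0 \<sigma> x))"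
    proof
      fix x
      have "ennreal (exp (- c * x^2)) = ennreal (K * normal_density 0 \<sigma> x)" by (subst eq) (rule refl)
      also have "\<dots> = ennreal K * ennreal (normal_density 0 \<sigma> x)"
        using K by (intro ennreal_mult) auto
      finally show "ennreal (exp (- c * x^2)) = ennreal K * ennreal (normal_density 0 \<sigma> x)" .
    qed
    thus ?thesis by (simp add: nn_integral_cmult)
  qed
  ultimately show ?thesis by (simp add: ennreal_mult_less_top)
qed

lemma gauss2_finite:
  assumes c: "c > 0"
  shows "(\<integral>\<^sup>+ u. ennreal (exp (- c * (cmod (u::complex))^2)) \<partial>lborel) < \<infinity>"
proof -
  let ?f = "\<lambda>(b::complex) (x::real). ennreal (exp (- c * x^2))"
  have "(\<lambda>u::complex. ennreal (exp (- c * (cmod u)^2))) = (\<lambda>u. \<Prod>b\<in>Basis. ?f b (u \<bullet> b))"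
  proof
    fix u :: complex
    have "exp (- c * (cmod u)^2) = exp (- c * (Re u)^2) * exp (- c * (Im u)^2)"
      by (simp add: cmod_power2 algebra_simps exp_add[symmetric])
    thus "ennreal (exp (- c * (cmod u)^2)) = (\<Prod>b\<in>Basis. ?f b (u \<bullet> b))"
      by (simp add: Basis_complex_def ennreal_mult inner_complex_def)
  qed
  hence "(\<integral>\<^sup>+ u. ennreal (exp (- c * (cmod (u::complex))^2)) \<partial>lborel) = (\<integral>\<^sup>+ u. (\<Prod>b\<in>Basis. ?f b (u \<bullet> b)) \<partial>lborel)"
    by (simp only:)
  also have "\<dots> = (\<Prod>b\<in>(Basis::complex set). \<integral>\<^sup>+ x. ?f b x \<partial>lborel)"
    by (rule nn_integral_lborel_prod) auto
  also have "\<dots> < \<infinity>" using gauss1_finite[OF c]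
    by (simp add: Basis_complex_def ennreal_mult_less_top)
  finally show ?thesis .
qed

lemma nn_integral_translate:
  assumes f: "f \<in> borel_measurable (borel :: complex measure)"
  shows "(\<integral>\<^sup>+ z. f (z - w) \<partial>lborel) = (\<integral>\<^sup>+ z. f z \<partial>lborel)"
proof -
  have "(\<integral>\<^sup>+ z. f z \<partial>lborel) = (\<integral>\<^sup>+ z. f z \<partial>(distr lborel borel ((+) (-w))))"
    by (simp add: lborel_distr_plus)
  also have "\<dots> = (\<integral>\<^sup>+ z. f (-w + z) \<partial>lborel)"
    using f by (intro nn_integral_distr) auto
  finally show ?thesis by simp
qed



lemma pair_meas_transfer:
  fixes \<mu> :: "complex measure"
  assumes S: "sets \<mu> = sets borel"
    and F: "F \<in> borel_measurable (borel :: (complex\<times>complex) measure)"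
  shows "F \<in> borel_measurable (lborel \<Otimes>\<^sub>M \<mu>)"
proof -
  have s1: "sets (lborel \<Otimes>\<^sub>M \<mu>) = sets (borel \<Otimes>\<^sub>M (borel :: complex measure))"
    by (rule sets_pair_measure_cong[OF sets_lborel S])
  have s2: "sets (lborel \<Otimes>\<^sub>M \<mu>) = sets (borel :: (complex\<times>complex) measure)"
    using s1 by (simp only: borel_prod)
  show ?thesis using F measurable_cong_sets[OF s2 refl] by blast
qed

lemma gker_meas: "(\<lambda>u::complex. ennreal (exp (- \<alpha> * t * (cmod u)^2 / 2))) \<in> borel_measurable borel"
  by measurable

lemma finite_imp_berezin:
  fixes \<mu> :: "complex measure"
  assumes S: "sets \<mu> = sets borel" and a: "\<alpha> > 0" and t: "t > 0" and fin: "emeasure \<mu> UNIV < \<infinity>"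
  shows "(\<integral>\<^sup>+ z. berezin \<alpha> t \<mu> z \<partial>lborel) < \<infinity>"
proof -
  have sp: "space \<mu> = UNIV" using sets_eq_imp_space_eq[OF S] by simp
  have "finite_measure \<mu>" using fin sp by (intro finite_measureI) auto
  hence sf: "sigma_finite_measure \<mu>" by (rule finite_measure.axioms)
  interpret pair_sigma_finite lborel \<mu>
    by (intro pair_sigma_finite.intro sf) (rule lborel.sigma_finite_measure_axioms)
  define g where "g = (\<lambda>u::complex. ennreal (exp (- \<alpha> * t * (cmod u)^2 / 2)))"
  have gm: "g \<in> borel_measurable borel" unfolding g_def by (rule gker_meas)
  define G where "G = (\<integral>\<^sup>+ u. g u \<partial>lborel)"
  have G: "G < \<infinity>"
  proof -
    have "g = (\<lambda>u. ennreal (exp (- (\<alpha> * t / 2) * (cmod u)^2)))"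
      unfolding g_def by (rule ext) (simp add: field_simps)
    thus ?thesis unfolding G_def using gauss2_finite[of "\<alpha> * t / 2"] a t by simp
  qed
  have b: "berezin \<alpha> t \<mu> z = (\<integral>\<^sup>+ w. ennreal (\<alpha> / pi) * g (z - w) \<partial>\<mu>)" for z
  proof -
    have "(\<lambda>w. g (z - w)) \<in> borel_measurable \<mu>"
      unfolding measurable_cong_sets[OF S refl] using gm by measurable
    thus ?thesis unfolding berezin_def g_def by (simp add: nn_integral_cmult)
  qed
  have inner: "(\<integral>\<^sup>+ z. ennreal (\<alpha> / pi) * g (z - w) \<partial>lborel) = ennreal (\<alpha> / pi) * G" for w
  proof -
    have "(\<lambda>z. g (z - w)) \<in> borel_measurable lborel" using gm by measurable
    hence "(\<integral>\<^sup>+ z. ennreal (\<alpha> / pi) * g (z - w) \<partial>lborel) = ennreal (\<alpha> / pi) * (\<integral>\<^sup>+ z. g (z - w) \<partial>lborel)"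
      by (simp add: nn_integral_cmult)
    also have "(\<integral>\<^sup>+ z. g (z - w) \<partial>lborel) = G" unfolding G_def by (rule nn_integral_translate[OF gm])
    finally show ?thesis .
  qed
  have pm: "(\<lambda>(z, w). ennreal (\<alpha> / pi) * g (z - w)) \<in> borel_measurable (lborel \<Otimes>\<^sub>M \<mu>)"
  proof (rule pair_meas_transfer[OF S])
    have d: "(\<lambda>p::complex\<times>complex. fst p - snd p) \<in> borel_measurable borel"
      by (intro borel_measurable_continuous_onI continuous_intros)
    have "(\<lambda>p. g (fst p - snd p)) \<in> borel_measurable borel"
      using measurable_compose[OF d gm] by simp
    hence "(\<lambda>p. ennreal (\<alpha> / pi) * g (fst p - snd p)) \<in> borel_measurable borel"
      by (intro borel_measurable_times_ennreal) auto
    thus "(\<lambda>(z, w). ennreal (\<alpha> / pi) * g (z - w)) \<in> borel_measurable borel"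
      by (simp add: split_beta')
  qed
  have "(\<integral>\<^sup>+ z. berezin \<alpha> t \<mu> z \<partial>lborel) = (\<integral>\<^sup>+ z. (\<integral>\<^sup>+ w. ennreal (\<alpha> / pi) * g (z - w) \<partial>\<mu>) \<partial>lborel)"
    by (simp add: b)
  also have "\<dots> = (\<integral>\<^sup>+ w. (\<integral>\<^sup>+ z. ennreal (\<alpha> / pi) * g (z - w) \<partial>lborel) \<partial>\<mu>)"
    by (rule Fubini'[symmetric]) (rule pm)
  also have "\<dots> = ennreal (\<alpha> / pi) * G * emeasure \<mu> UNIV" by (simp add: inner sp)
  also have "\<dots> < \<infinity>" using G fin by (simp add: ennreal_mult_less_top)
  finally show ?thesis .
qed

lemma berezin_imp_balls:
  fixes \<mu> :: "complex measure"
  assumes S: "sets \<mu> = sets borel" and a: "\<alpha> > 0" and r: "r > 0"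
    and fin: "(\<integral>\<^sup>+ z. berezin \<alpha> 1 \<mu> z \<partial>lborel) < \<infinity>"
  shows "(\<integral>\<^sup>+ z. emeasure \<mu> (ball z r) \<partial>lborel) < \<infinity>"
proof -
  define K where "K = \<alpha> / pi * exp (- \<alpha> * r^2 / 2)"
  have K: "K > 0" using a by (simp add: K_def)
  have pt: "ennreal K * emeasure \<mu> (ball z r) \<le> berezin \<alpha> 1 \<mu> z" for z
  proof -
    have "ennreal (exp (- \<alpha> * r^2 / 2)) * emeasure \<mu> (ball z r)
        = (\<integral>\<^sup>+ w. ennreal (exp (- \<alpha> * r^2 / 2)) * indicator (ball z r) w \<partial>\<mu>)"
      using S by (simp add: nn_integral_cmult_indicator)
    also have "\<dots> \<le> (\<integral>\<^sup>+ w. ennreal (exp (- \<alpha> * 1 * (cmod (z - w))^2 / 2)) \<partial>\<mu>)"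
    proof (intro nn_integral_mono)
      fix w
      show "ennreal (exp (- \<alpha> * r^2 / 2)) * indicator (ball z r) w
            \<le> ennreal (exp (- \<alpha> * 1 * (cmod (z - w))^2 / 2))"
      proof (cases "w \<in> ball z r")
        case True
        hence "cmod (z - w) < r" by (simp add: dist_norm)
        hence "(cmod (z - w))^2 \<le> r^2" by (intro power_mono) auto
        hence "- \<alpha> * r^2 / 2 \<le> - \<alpha> * 1 * (cmod (z - w))^2 / 2" using a by simp
        thus ?thesis using True by (simp add: ennreal_leI)
      qed simp
    qed
    finally have "ennreal (exp (- \<alpha> * r^2 / 2)) * emeasure \<mu> (ball z r)
        \<le> (\<integral>\<^sup>+ w. ennreal (exp (- \<alpha> * 1 * (cmod (z - w))^2 / 2)) \<partial>\<mu>)" .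
    hence "ennreal (\<alpha> / pi) * (ennreal (exp (- \<alpha> * r^2 / 2)) * emeasure \<mu> (ball z r))
        \<le> berezin \<alpha> 1 \<mu> z"
      unfolding berezin_def by (rule mult_left_mono) simp
    moreover have "ennreal K = ennreal (\<alpha> / pi) * ennreal (exp (- \<alpha> * r^2 / 2))"
      unfolding K_def using a by (intro ennreal_mult) auto
    ultimately show ?thesis by (simp add: mult.assoc)
  qed
  have "ennreal K * (\<integral>\<^sup>+ z. emeasure \<mu> (ball z r) \<partial>lborel) = (\<integral>\<^sup>+ z. ennreal K * emeasure \<mu> (ball z r) \<partial>lborel)"
    using mu_ball_meas[OF S, of r] by (simp add: nn_integral_cmult)
  also have "\<dots> \<le> (\<integral>\<^sup>+ z. berezin \<alpha> 1 \<mu> z \<partial>lborel)" by (intro nn_integral_mono pt)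
  finally have "ennreal K * (\<integral>\<^sup>+ z. emeasure \<mu> (ball z r) \<partial>lborel) < \<infinity>" using fin by simp
  thus ?thesis using K by (auto simp: ennreal_mult_less_top)
qed



lemma fock_pt_le:
  assumes "f \<in> fock_inf \<alpha>"
  shows "norm (f z) * exp (- \<alpha> * (cmod z)^2 / 2) \<le> fock_inf_norm \<alpha> f"
  using assms unfolding fock_inf_def fock_inf_norm_def
  by (auto intro: cSUP_upper)

lemma finite_imp_carleson:
  fixes \<mu> :: "complex measure"
  assumes S: "sets \<mu> = sets borel" and q: "q > 0" and fin: "emeasure \<mu> UNIV < \<infinity>"
  shows "fock_carleson_inf \<alpha> q \<mu>"
proof -
  have sp: "space \<mu> = UNIV" using sets_eq_imp_space_eq[OF S] by simp
  define Mr where "Mr = enn2real (emeasure \<mu> UNIV)"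
  have Mr: "emeasure \<mu> UNIV = ennreal Mr" "Mr \<ge> 0"
    using fin by (auto simp: Mr_def ennreal_enn2real_if less_top)
  define C where "C = Mr powr (1/q) + 1"
  have C: "C > 0" by (simp add: C_def add_nonneg_pos)
  show ?thesis unfolding fock_carleson_inf_def
  proof (intro exI conjI ballI)
    show "C > 0" by (rule C)
    fix f assume f: "f \<in> fock_inf \<alpha>"
    define N where "N = fock_inf_norm \<alpha> f"
    let ?h = "\<lambda>z. norm (f z) * exp (- \<alpha> * (cmod z)^2 / 2)"
    have hN: "?h z \<le> N" for z using fock_pt_le[OF f] by (simp add: N_def)
    have N0: "N \<ge> 0" using hN[of 0] by (meson mult_nonneg_nonneg norm_ge_zero exp_ge_zero order_trans)
    have pq: "?h z powr q \<le> N powr q" for z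
      using hN[of z] q by (intro powr_mono2) auto
    have "(\<integral>\<^sup>+ z. ennreal (?h z powr q) \<partial>\<mu>) \<le> (\<integral>\<^sup>+ z. ennreal (N powr q) \<partial>\<mu>)"
      by (intro nn_integral_mono ennreal_leI pq)
    also have "\<dots> = ennreal (N powr q * Mr)" using Mr by (simp add: sp ennreal_mult)
    finally have I: "(\<integral>\<^sup>+ z. ennreal (?h z powr q) \<partial>\<mu>) \<le> ennreal (N powr q * Mr)" .
    thus "(\<integral>\<^sup>+ z. ennreal (?h z powr q) \<partial>\<mu>) < \<infinity>"
      using le_less_trans by fastforce
    have "enn2real (\<integral>\<^sup>+ z. ennreal (?h z powr q) \<partial>\<mu>) \<le> N powr q * Mr"
      using I Mr by (intro enn2real_leI) auto
    hence "enn2real (\<integral>\<^sup>+ z. ennreal (?h z powr q) \<partial>\<mu>) powr (1/q) \<le> (N powr q * Mr) powr (1/q)"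
      using q by (intro powr_mono2) auto
    also have "\<dots> = N * Mr powr (1/q)"
      using q N0 by (simp add: powr_mult powr_powr powr_one)
    also have "\<dots> \<le> C * N" using N0 by (simp add: C_def algebra_simps)
    finally show "enn2real (\<integral>\<^sup>+ z. ennreal (?h z powr q) \<partial>\<mu>) powr (1/q) \<le> C * fock_inf_norm \<alpha> f"
      by (simp add: N_def)
  qed
qed



lemma geo_inj_bound:
  fixes \<rho> :: real
  assumes r0: "0 \<le> \<rho>" and r1: "\<rho> < 1" and F: "finite F" and inj: "inj_on h F"
  shows "(\<Sum>j\<in>F. \<rho> ^ Suc (h j)) \<le> \<rho> / (1 - \<rho>)"
proof -
  have s: "(\<lambda>m. \<rho> ^ Suc m) sums (\<rho> * (1 / (1 - \<rho>)))"
    using sums_mult[OF geometric_sums[of \<rho>], of \<rho>] r0 r1 by simp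
  have "(\<Sum>j\<in>F. \<rho> ^ Suc (h j)) = (\<Sum>m\<in>h ` F. \<rho> ^ Suc m)"
    using sum.reindex[OF inj, of "\<lambda>m. \<rho> ^ Suc m"] by simp
  also have "\<dots> \<le> (\<Sum>m. \<rho> ^ Suc m)"
    using s F r0 r1 by (intro sum_le_suminf) (auto simp: sums_summable)
  also have "\<dots> = \<rho> / (1 - \<rho>)" using sums_unique[OF s] by simp
  finally show ?thesis .
qed

lemma geo_two_sided:
  fixes \<rho> :: real and j0 :: int
  assumes r0: "0 \<le> \<rho>" and r1: "\<rho> < 1" and J: "finite J"
  shows "(\<Sum>j\<in>J - {j0}. \<rho> ^ nat \<bar>j - j0\<bar>) \<le> 2 * \<rho> / (1 - \<rho>)"
proof -
  let ?P = "J \<inter> {j0<..}" and ?N = "J \<inter> {..<j0}"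
  have split: "J - {j0} = ?P \<union> ?N" by auto
  have disj: "?P \<inter> ?N = {}" by auto
  have "(\<Sum>j\<in>J - {j0}. \<rho> ^ nat \<bar>j - j0\<bar>) = (\<Sum>j\<in>?P. \<rho> ^ nat \<bar>j - j0\<bar>) + (\<Sum>j\<in>?N. \<rho> ^ nat \<bar>j - j0\<bar>)"
    unfolding split using J disj by (intro sum.union_disjoint) auto
  also have "(\<Sum>j\<in>?P. \<rho> ^ nat \<bar>j - j0\<bar>) = (\<Sum>j\<in>?P. \<rho> ^ Suc (nat (j - j0 - 1)))"
    by (intro sum.cong refl) (auto simp: Suc_nat_eq_nat_zadd1)
  also have "\<dots> \<le> \<rho> / (1 - \<rho>)"
    using J r0 r1 by (intro geo_inj_bound) (auto simp: inj_on_def)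
  also have "(\<Sum>j\<in>?N. \<rho> ^ nat \<bar>j - j0\<bar>) = (\<Sum>j\<in>?N. \<rho> ^ Suc (nat (j0 - j - 1)))"
    by (intro sum.cong refl) (auto simp: Suc_nat_eq_nat_zadd1)
  also have "\<dots> \<le> \<rho> / (1 - \<rho>)"
    using J r0 r1 by (intro geo_inj_bound) (auto simp: inj_on_def)
  finally show ?thesis by simp
qed

lemma gauss_term_bound:
  fixes \<alpha> x p Nr :: real and j j0 :: int
  assumes a: "\<alpha> > 0" and N: "Nr \<ge> 1" and x0: "\<bar>x - (Nr * j0 + p)\<bar> \<le> Nr / 2" and jj: "j \<noteq> j0"
  shows "exp (- \<alpha> * (x - (Nr * j + p))^2 / 2) \<le> exp (- \<alpha> * Nr^2 / 8) ^ nat \<bar>j - j0\<bar>"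
proof -
  define m where "m = \<bar>j - j0\<bar>"
  have m1: "m \<ge> 1" using jj by (simp add: m_def)
  have "\<bar>Nr * (j - j0)\<bar> = Nr * m" using N by (simp add: m_def abs_mult)
  moreover have "x - (Nr * j + p) = (x - (Nr * j0 + p)) - Nr * (j - j0)" by (simp add: algebra_simps)
  ultimately have "\<bar>x - (Nr * j + p)\<bar> \<ge> Nr * m - Nr / 2" using x0 by linarith
  moreover have "Nr * m - Nr / 2 \<ge> Nr * m / 2" using m1 N by (simp add: field_simps)
  ultimately have d: "\<bar>x - (Nr * j + p)\<bar> \<ge> Nr * m / 2" by linarith
  have "(Nr * m / 2)^2 \<le> (x - (Nr * j + p))^2"
  proof -
    have "0 \<le> Nr * m / 2" using N m1 by simp
    from power_mono[OF d this, of 2] show ?thesis by simp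
  qed
  moreover have "Nr^2 * m / 4 \<le> (Nr * m / 2)^2"
  proof -
    have "real_of_int m \<le> real_of_int m * real_of_int m" using m1 by (simp add: mult_le_cancel_left1)
    hence "Nr^2 * m \<le> Nr^2 * (m * m)" by (intro mult_left_mono) auto
    thus ?thesis by (simp add: power2_eq_square field_simps)
  qed
  ultimately have "Nr^2 * m / 4 \<le> (x - (Nr * j + p))^2" by linarith
  hence "- \<alpha> * (x - (Nr * j + p))^2 / 2 \<le> real (nat m) * (- \<alpha> * Nr^2 / 8)"
    using a m1 by (simp add: field_simps)
  hence "exp (- \<alpha> * (x - (Nr * j + p))^2 / 2) \<le> exp (real (nat m) * (- \<alpha> * Nr^2 / 8))" by simp
  also have "\<dots> = exp (- \<alpha> * Nr^2 / 8) ^ nat m" by (rule exp_of_nat_mult)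
  finally show ?thesis by (simp add: m_def)
qed

lemma gauss_tail:
  fixes \<alpha> x p Nr :: real and j0 :: int
  assumes a: "\<alpha> > 0" and N: "Nr \<ge> 1" and x0: "\<bar>x - (Nr * j0 + p)\<bar> \<le> Nr / 2" and J: "finite J"
  shows "(\<Sum>j\<in>J - {j0}. exp (- \<alpha> * (x - (Nr * j + p))^2 / 2))
          \<le> 2 * exp (- \<alpha> * Nr^2 / 8) / (1 - exp (- \<alpha> * Nr^2 / 8))"
proof -
  have r1: "exp (- \<alpha> * Nr^2 / 8) < 1" using a N by simp
  have "(\<Sum>j\<in>J - {j0}. exp (- \<alpha> * (x - (Nr * j + p))^2 / 2))
        \<le> (\<Sum>j\<in>J - {j0}. exp (- \<alpha> * Nr^2 / 8) ^ nat \<bar>j - j0\<bar>)"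
    using gauss_term_bound[OF a N x0] by (intro sum_mono) auto
  also have "\<dots> \<le> 2 * exp (- \<alpha> * Nr^2 / 8) / (1 - exp (- \<alpha> * Nr^2 / 8))"
    using J r1 by (intro geo_two_sided) auto
  finally show ?thesis .
qed



definition SA :: "real \<Rightarrow> real \<Rightarrow> real \<Rightarrow> int set \<Rightarrow> complex \<Rightarrow> complex" where
  "SA \<alpha> Nr p J z = (\<Sum>j\<in>J. exp (complex_of_real (\<alpha> * (Nr * of_int j + p)) * z - complex_of_real (\<alpha> * (Nr * of_int j + p)^2 / 2)))"

definition SB :: "real \<Rightarrow> real \<Rightarrow> real \<Rightarrow> int set \<Rightarrow> complex \<Rightarrow> complex" where
  "SB \<alpha> Nr p J z = (\<Sum>j\<in>J. exp (- \<i> * complex_of_real (\<alpha> * (Nr * of_int j + p)) * z - complex_of_real (\<alpha> * (Nr * of_int j + p)^2 / 2)))"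

lemma normA: "norm (exp (complex_of_real (\<alpha> * u) * z - complex_of_real (\<alpha> * u^2 / 2))) * exp (- \<alpha> * (Re z)^2 / 2)
   = exp (- \<alpha> * (Re z - u)^2 / 2)"
proof -
  have "norm (exp (complex_of_real (\<alpha> * u) * z - complex_of_real (\<alpha> * u^2 / 2))) = exp (\<alpha> * u * Re z - \<alpha> * u^2 / 2)"
    by simp
  moreover have "exp (\<alpha> * u * Re z - \<alpha> * u^2 / 2) * exp (- \<alpha> * (Re z)^2 / 2) = exp (- \<alpha> * (Re z - u)^2 / 2)"
    by (simp add: exp_add[symmetric] power2_diff algebra_simps)
  ultimately show ?thesis by simp
qed

lemma normB: "norm (exp (- \<i> * complex_of_real (\<alpha> * u) * z - complex_of_real (\<alpha> * u^2 / 2))) * exp (- \<alpha> * (Im z)^2 / 2)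
   = exp (- \<alpha> * (Im z - u)^2 / 2)"
proof -
  have "norm (exp (- \<i> * complex_of_real (\<alpha> * u) * z - complex_of_real (\<alpha> * u^2 / 2))) = exp (\<alpha> * u * Im z - \<alpha> * u^2 / 2)"
    by simp
  moreover have "exp (\<alpha> * u * Im z - \<alpha> * u^2 / 2) * exp (- \<alpha> * (Im z)^2 / 2) = exp (- \<alpha> * (Im z - u)^2 / 2)"
    by (simp add: exp_add[symmetric] power2_diff algebra_simps)
  ultimately show ?thesis by simp
qed

lemma sum_upper_gen:
  fixes a :: "int \<Rightarrow> complex" and w :: real
  assumes w: "w \<ge> 0"
  shows "norm (\<Sum>j\<in>J. a j) * w \<le> (\<Sum>j\<in>J. norm (a j) * w)"
  using mult_right_mono[OF norm_sum[of a J] w] by (simp add: sum_distrib_right)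

lemma sum_lower_gen:
  fixes a :: "int \<Rightarrow> complex" and w :: real
  assumes w: "w \<ge> 0" and J: "finite J" and j0: "j0 \<in> J"
  shows "norm (\<Sum>j\<in>J. a j) * w \<ge> norm (a j0) * w - (\<Sum>j\<in>J - {j0}. norm (a j) * w)"
proof -
  have "(\<Sum>j\<in>J. a j) = a j0 + (\<Sum>j\<in>J - {j0}. a j)" using J j0 by (rule sum.remove)
  hence "norm (a j0) \<le> norm (\<Sum>j\<in>J. a j) + norm (\<Sum>j\<in>J - {j0}. a j)"
    by (metis add_diff_cancel_right' norm_triangle_ineq4)
  also have "norm (\<Sum>j\<in>J - {j0}. a j) \<le> (\<Sum>j\<in>J - {j0}. norm (a j))" by (rule norm_sum)
  finally have "norm (a j0) - (\<Sum>j\<in>J - {j0}. norm (a j)) \<le> norm (\<Sum>j\<in>J. a j)" by simp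
  from mult_right_mono[OF this w] show ?thesis by (simp add: sum_distrib_right sum_distrib_left algebra_simps)
qed

definition tau :: "real \<Rightarrow> real \<Rightarrow> real" where
  "tau \<alpha> Nr = 2 * exp (- \<alpha> * Nr^2 / 8) / (1 - exp (- \<alpha> * Nr^2 / 8))"

lemma exists_near:
  fixes Nr :: real assumes N: "Nr > 0"
  shows "\<exists>j0::int. \<bar>x - (Nr * of_int j0 + p)\<bar> \<le> Nr / 2"
proof -
  define j0 where "j0 = \<lfloor>(x - p) / Nr + 1/2\<rfloor>"
  have "j0 \<le> (x - p) / Nr + 1/2" "(x - p) / Nr + 1/2 < j0 + 1" unfolding j0_def by linarith+
  hence "\<bar>(x - p) / Nr - j0\<bar> \<le> 1/2" by linarith
  hence "\<bar>(x - p) / Nr - j0\<bar> * Nr \<le> 1/2 * Nr" using N by (intro mult_right_mono) auto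
  moreover have "\<bar>(x - p) / Nr - j0\<bar> * Nr = \<bar>x - (Nr * of_int j0 + p)\<bar>"
    using N by (simp add: abs_mult[symmetric] field_simps) 
  ultimately show ?thesis by auto
qed

lemma sum_e_upper:
  fixes \<alpha> x p Nr :: real
  assumes a: "\<alpha> > 0" and N: "Nr \<ge> 1" and J: "finite J"
  shows "(\<Sum>j\<in>J. exp (- \<alpha> * (x - (Nr * of_int j + p))^2 / 2)) \<le> 1 + tau \<alpha> Nr"
proof -
  obtain j0 :: int where j0: "\<bar>x - (Nr * of_int j0 + p)\<bar> \<le> Nr / 2" using exists_near[of Nr x p] N by auto
  let ?e = "\<lambda>j::int. exp (- \<alpha> * (x - (Nr * of_int j + p))^2 / 2)"
  have t: "(\<Sum>j\<in>J - {j0}. ?e j) \<le> tau \<alpha> Nr"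
    unfolding tau_def by (rule gauss_tail[OF a N j0 J])
  have e1: "?e j0 \<le> 1" using a by simp
  show ?thesis
  proof (cases "j0 \<in> J")
    case True
    hence "(\<Sum>j\<in>J. ?e j) = ?e j0 + (\<Sum>j\<in>J - {j0}. ?e j)" using J by (intro sum.remove)
    thus ?thesis using t e1 by linarith
  next
    case False
    hence "J - {j0} = J" by auto
    moreover have "tau \<alpha> Nr \<le> 1 + tau \<alpha> Nr" by simp
    ultimately show ?thesis using t by simp
  qed
qed

lemma SA_upper:
  assumes a: "\<alpha> > 0" and N: "Nr \<ge> 1" and J: "finite J"
  shows "norm (SA \<alpha> Nr p J z) * exp (- \<alpha> * (Re z)^2 / 2) \<le> 1 + tau \<alpha> Nr"
proof -
  have "norm (SA \<alpha> Nr p J z) * exp (- \<alpha> * (Re z)^2 / 2)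
      \<le> (\<Sum>j\<in>J. norm (exp (complex_of_real (\<alpha> * (Nr * of_int j + p)) * z - complex_of_real (\<alpha> * (Nr * of_int j + p)^2 / 2))) * exp (- \<alpha> * (Re z)^2 / 2))"
    unfolding SA_def by (rule sum_upper_gen) simp
  also have "\<dots> = (\<Sum>j\<in>J. exp (- \<alpha> * (Re z - (Nr * of_int j + p))^2 / 2))" by (simp only: normA)
  also have "\<dots> \<le> 1 + tau \<alpha> Nr" by (rule sum_e_upper[OF a N J])
  finally show ?thesis .
qed

lemma SB_upper:
  assumes a: "\<alpha> > 0" and N: "Nr \<ge> 1" and J: "finite J"
  shows "norm (SB \<alpha> Nr p J z) * exp (- \<alpha> * (Im z)^2 / 2) \<le> 1 + tau \<alpha> Nr"
proof -
  have "norm (SB \<alpha> Nr p J z) * exp (- \<alpha> * (Im z)^2 / 2)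
      \<le> (\<Sum>j\<in>J. norm (exp (- \<i> * complex_of_real (\<alpha> * (Nr * of_int j + p)) * z - complex_of_real (\<alpha> * (Nr * of_int j + p)^2 / 2))) * exp (- \<alpha> * (Im z)^2 / 2))"
    unfolding SB_def by (rule sum_upper_gen) simp
  also have "\<dots> = (\<Sum>j\<in>J. exp (- \<alpha> * (Im z - (Nr * of_int j + p))^2 / 2))" by (simp only: normB)
  also have "\<dots> \<le> 1 + tau \<alpha> Nr" by (rule sum_e_upper[OF a N J])
  finally show ?thesis .
qed

lemma e_lower:
  fixes d :: real assumes a: "\<alpha> > 0" and d: "\<bar>d\<bar> \<le> 1/2"
  shows "exp (- \<alpha> / 8) \<le> exp (- \<alpha> * d^2 / 2)"
proof -
  have "d^2 \<le> (1/2)^2" using d by (metis abs_ge_zero power2_abs power_mono)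
  hence "- \<alpha> / 8 \<le> - \<alpha> * d^2 / 2" using a by (simp add: field_simps)
  thus ?thesis by simp
qed

lemma SA_lower:
  assumes a: "\<alpha> > 0" and N: "Nr \<ge> 1" and J: "finite J" and j0: "j0 \<in> J"
    and near: "\<bar>Re z - (Nr * of_int j0 + p)\<bar> \<le> 1/2"
  shows "norm (SA \<alpha> Nr p J z) * exp (- \<alpha> * (Re z)^2 / 2) \<ge> exp (- \<alpha> / 8) - tau \<alpha> Nr"
proof -
  let ?a = "\<lambda>j::int. exp (complex_of_real (\<alpha> * (Nr * of_int j + p)) * z - complex_of_real (\<alpha> * (Nr * of_int j + p)^2 / 2))"
  let ?w = "exp (- \<alpha> * (Re z)^2 / 2)"
  have "norm (SA \<alpha> Nr p J z) * ?w \<ge> norm (?a j0) * ?w - (\<Sum>j\<in>J - {j0}. norm (?a j) * ?w)"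
    unfolding SA_def by (rule sum_lower_gen[OF _ J j0]) simp
  also have "norm (?a j0) * ?w = exp (- \<alpha> * (Re z - (Nr * of_int j0 + p))^2 / 2)" by (rule normA)
  also have "(\<Sum>j\<in>J - {j0}. norm (?a j) * ?w) = (\<Sum>j\<in>J - {j0}. exp (- \<alpha> * (Re z - (Nr * of_int j + p))^2 / 2))"
    by (simp only: normA)
  finally have *: "norm (SA \<alpha> Nr p J z) * ?w \<ge> exp (- \<alpha> * (Re z - (Nr * of_int j0 + p))^2 / 2) - (\<Sum>j\<in>J - {j0}. exp (- \<alpha> * (Re z - (Nr * of_int j + p))^2 / 2))" .
  have near2: "\<bar>Re z - (Nr * of_int j0 + p)\<bar> \<le> Nr / 2" using near N by linarith
  have "(\<Sum>j\<in>J - {j0}. exp (- \<alpha> * (Re z - (Nr * of_int j + p))^2 / 2)) \<le> tau \<alpha> Nr"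
    unfolding tau_def by (rule gauss_tail[OF a N near2 J])
  moreover have "exp (- \<alpha> / 8) \<le> exp (- \<alpha> * (Re z - (Nr * of_int j0 + p))^2 / 2)" by (rule e_lower[OF a near])
  ultimately show ?thesis using * by linarith
qed

lemma SB_lower:
  assumes a: "\<alpha> > 0" and N: "Nr \<ge> 1" and J: "finite J" and j0: "j0 \<in> J"
    and near: "\<bar>Im z - (Nr * of_int j0 + p)\<bar> \<le> 1/2"
  shows "norm (SB \<alpha> Nr p J z) * exp (- \<alpha> * (Im z)^2 / 2) \<ge> exp (- \<alpha> / 8) - tau \<alpha> Nr"
proof -
  let ?a = "\<lambda>j::int. exp (- \<i> * complex_of_real (\<alpha> * (Nr * of_int j + p)) * z - complex_of_real (\<alpha> * (Nr * of_int j + p)^2 / 2))"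
  let ?w = "exp (- \<alpha> * (Im z)^2 / 2)"
  have "norm (SB \<alpha> Nr p J z) * ?w \<ge> norm (?a j0) * ?w - (\<Sum>j\<in>J - {j0}. norm (?a j) * ?w)"
    unfolding SB_def by (rule sum_lower_gen[OF _ J j0]) simp
  also have "norm (?a j0) * ?w = exp (- \<alpha> * (Im z - (Nr * of_int j0 + p))^2 / 2)" by (rule normB)
  also have "(\<Sum>j\<in>J - {j0}. norm (?a j) * ?w) = (\<Sum>j\<in>J - {j0}. exp (- \<alpha> * (Im z - (Nr * of_int j + p))^2 / 2))"
    by (simp only: normB)
  finally have *: "norm (SB \<alpha> Nr p J z) * ?w \<ge> exp (- \<alpha> * (Im z - (Nr * of_int j0 + p))^2 / 2) - (\<Sum>j\<in>J - {j0}. exp (- \<alpha> * (Im z - (Nr * of_int j + p))^2 / 2))" .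
  have near2: "\<bar>Im z - (Nr * of_int j0 + p)\<bar> \<le> Nr / 2" using near N by linarith
  have "(\<Sum>j\<in>J - {j0}. exp (- \<alpha> * (Im z - (Nr * of_int j + p))^2 / 2)) \<le> tau \<alpha> Nr"
    unfolding tau_def by (rule gauss_tail[OF a N near2 J])
  moreover have "exp (- \<alpha> / 8) \<le> exp (- \<alpha> * (Im z - (Nr * of_int j0 + p))^2 / 2)" by (rule e_lower[OF a near])
  ultimately show ?thesis using * by linarith
qed



lemma choose_N:
  assumes a: "\<alpha> > 0"
  shows "\<exists>Nn::nat. Nn \<ge> 1 \<and> tau \<alpha> (real Nn) \<le> exp (- \<alpha> / 8) / 2"
proof -
  define Nn where "Nn = nat \<lceil>1 + 8 * ln 8 / \<alpha>\<rceil>"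
  have ln8: "ln (8::real) > 0" by simp
  have N1: "real Nn \<ge> 1 + 8 * ln 8 / \<alpha>" unfolding Nn_def by linarith
  have Nge: "real Nn \<ge> 1" using N1 ln8 a by (smt (verit) divide_pos_pos)
  hence "Nn \<ge> 1" by simp
  have sq: "real Nn ^ 2 \<ge> real Nn" using Nge by (simp add: power2_eq_square)
  have "\<alpha> * real Nn \<ge> \<alpha> + 8 * ln 8"
  proof -
    have "\<alpha> * (1 + 8 * ln 8 / \<alpha>) = \<alpha> + 8 * ln 8" using a by (simp add: field_simps)
    thus ?thesis using mult_left_mono[OF N1, of \<alpha>] a by simp
  qed
  hence "\<alpha> * real Nn ^ 2 \<ge> \<alpha> + 8 * ln 8"
    using mult_left_mono[OF sq, of \<alpha>] a by linarith
  hence le: "- \<alpha> * real Nn ^ 2 / 8 \<le> - \<alpha> / 8 + (- ln 8)" by simp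
  define \<rho> where "\<rho> = exp (- \<alpha> * real Nn ^ 2 / 8)"
  have "\<rho> \<le> exp (- \<alpha> / 8 + (- ln 8))" unfolding \<rho>_def using le by simp
  also have "\<dots> = exp (- \<alpha> / 8) * exp (- ln 8)" by (rule exp_add)
  also have "exp (- ln 8) = (1::real) / 8" by (simp add: exp_minus inverse_eq_divide)
  also have "exp (- \<alpha> / 8) * (1 / 8) = exp (- \<alpha> / 8) / 8" by simp
  finally have r8: "\<rho> \<le> exp (- \<alpha> / 8) / 8" .
  have e1: "exp (- \<alpha> / 8) \<le> 1" using a by simp
  have r0: "\<rho> > 0" by (simp add: \<rho>_def)
  have rh: "\<rho> \<le> 1/2" using r8 e1 by linarith
  have "tau \<alpha> (real Nn) = 2 * \<rho> / (1 - \<rho>)" by (simp add: tau_def \<rho>_def)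
  also have "\<dots> \<le> 4 * \<rho>" using rh r0 by (simp add: field_simps)
  also have "\<dots> \<le> exp (- \<alpha> / 8) / 2" using r8 by simp
  finally show ?thesis using \<open>Nn \<ge> 1\<close> by blast
qed

lemma H_factor:
  fixes A B :: complex
  shows "norm (A * B) * exp (- \<alpha> * (cmod z)^2 / 2)
     = (norm A * exp (- \<alpha> * (Re z)^2 / 2)) * (norm B * exp (- \<alpha> * (Im z)^2 / 2))"
proof -
  have "exp (- \<alpha> * (cmod z)^2 / 2) = exp (- \<alpha> * (Re z)^2 / 2) * exp (- \<alpha> * (Im z)^2 / 2)"
  proof -
    have "- \<alpha> * (cmod z)^2 / 2 = - \<alpha> * (Re z)^2 / 2 + - \<alpha> * (Im z)^2 / 2"
      by (simp add: cmod_power2 field_simps)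
    thus ?thesis by (simp only: exp_add)
  qed
  thus ?thesis by (simp add: norm_mult algebra_simps)
qed

lemma div_bound:
  fixes k j0 p Nn :: int
  assumes "k = Nn * j0 + p" "0 \<le> p" "p < Nn" "Nn \<ge> 1"
  shows "\<bar>j0\<bar> \<le> \<bar>k\<bar>"
proof (cases "j0 \<ge> 0")
  case True
  have "j0 \<le> Nn * j0" using True assms(4) by (simp add: mult_le_cancel_right1)
  thus ?thesis using True assms by linarith
next
  case False
  have "Nn * (j0 + 1) \<le> j0 + 1" using False assms(4)
    using mult_right_mono_neg[of 1 Nn "j0+1"] by simp
  thus ?thesis using False assms by (simp add: algebra_simps)
qed



lemma powr_inv_bound:
  fixes t B q :: real
  assumes t: "t \<ge> 0" and q: "q > 0" and tb: "t powr (1/q) \<le> B"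
  shows "t \<le> B powr q"
proof -
  have "t = (t powr (1/q)) powr q" using t q by (simp add: powr_powr powr_one)
  also have "\<dots> \<le> B powr q" using tb q by (intro powr_mono2) auto
  finally show ?thesis .
qed

lemma near_grid:
  fixes x :: real and n Nn :: nat
  assumes x: "\<bar>x\<bar> < real n" and N: "Nn \<ge> 1"
  shows "\<exists>p<Nn. \<exists>j0::int. j0 \<in> {- int (n+2)..int (n+2)} \<and> \<bar>x - (real Nn * of_int j0 + real p)\<bar> \<le> 1/2"
proof -
  define k where "k = \<lfloor>x + 1/2\<rfloor>"
  have "of_int k \<le> x + 1/2" "x + 1/2 < of_int k + 1" unfolding k_def by linarith+
  hence kx: "\<bar>x - of_int k\<bar> \<le> 1/2" by linarith
  have k1: "k < int n + 1" unfolding k_def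
    by (rule floor_less_iff[THEN iffD2]) (use x in \<open>simp add: abs_less_iff\<close>)
  have k2: "- int n \<le> k" unfolding k_def
    by (rule le_floor_iff[THEN iffD2]) (use x in \<open>simp add: abs_less_iff\<close>)
  define j0 where "j0 = k div int Nn"
  define p' where "p' = k mod int Nn"
  have p'0: "0 \<le> p'" "p' < int Nn" using N by (simp_all add: p'_def)
  have keq: "k = int Nn * j0 + p'" by (simp add: j0_def p'_def)
  have "\<bar>j0\<bar> \<le> \<bar>k\<bar>" using div_bound[OF keq p'0] N by simp
  hence j0J: "j0 \<in> {- int (n+2)..int (n+2)}" using k1 k2 by auto
  have "real (nat p') = of_int p'" using p'0 by simp
  moreover have "of_int k = real Nn * of_int j0 + of_int p'" using keq by simp
  ultimately have "\<bar>x - (real Nn * of_int j0 + real (nat p'))\<bar> \<le> 1/2" using kx by simp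
  moreover have "nat p' < Nn" using p'0 by simp
  ultimately show ?thesis using j0J by blast
qed

lemma carleson_imp_finite:
  fixes \<mu> :: "complex measure"
  assumes S: "sets \<mu> = sets borel" and a: "\<alpha> > 0" and q: "q > 0"
    and FC: "fock_carleson_inf \<alpha> q \<mu>"
  shows "emeasure \<mu> UNIV < \<infinity>"
proof -
  obtain C where C: "C > 0" and CF: "\<And>f. f \<in> fock_inf \<alpha> \<Longrightarrow>
      (\<integral>\<^sup>+ z. ennreal ((norm (f z) * exp (- \<alpha> * (cmod z)^2 / 2)) powr q) \<partial>\<mu>) < \<infinity> \<and>
      (enn2real (\<integral>\<^sup>+ z. ennreal ((norm (f z) * exp (- \<alpha> * (cmod z)^2 / 2)) powr q) \<partial>\<mu>))
         powr (1 / q) \<le> C * fock_inf_norm \<alpha> f"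
    using FC unfolding fock_carleson_inf_def by blast
  obtain Nn :: nat where N1: "Nn \<ge> 1" and tauN: "tau \<alpha> (real Nn) \<le> exp (- \<alpha> / 8) / 2"
    using choose_N[OF a] by blast
  define Nr where "Nr = real Nn"
  have Nr1: "Nr \<ge> 1" using N1 by (simp add: Nr_def)
  define E0 where "E0 = exp (- \<alpha> / 8)"
  have E0: "E0 > 0" "E0 \<le> 1" using a by (auto simp: E0_def)
  have tau: "tau \<alpha> Nr \<le> E0 / 2" using tauN by (simp add: Nr_def E0_def)
  define c where "c = (E0 / 2) * (E0 / 2)"
  have c: "c > 0" using E0 by (simp add: c_def)
  define JJ where "JJ = (\<lambda>L::nat. {- int L..int L})"
  have finJ: "finite (JJ L)" for L by (simp add: JJ_def)
  define FF where "FF = (\<lambda>(p::nat) (s::nat) (L::nat) z. SA \<alpha> Nr (real p) (JJ L) z * SB \<alpha> Nr (real s) (JJ L) z)"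
  define HH where "HH = (\<lambda>p s L z. norm (FF p s L z) * exp (- \<alpha> * (cmod z)^2 / 2))"
  have HH_fac: "HH p s L z = (norm (SA \<alpha> Nr (real p) (JJ L) z) * exp (- \<alpha> * (Re z)^2 / 2))
      * (norm (SB \<alpha> Nr (real s) (JJ L) z) * exp (- \<alpha> * (Im z)^2 / 2))" for p s L z
    unfolding HH_def FF_def by (rule H_factor)
  have HH_le: "HH p s L z \<le> 4" for p s L z
  proof -
    have "norm (SA \<alpha> Nr (real p) (JJ L) z) * exp (- \<alpha> * (Re z)^2 / 2) \<le> 1 + tau \<alpha> Nr"
      by (rule SA_upper[OF a Nr1 finJ])
    moreover have "norm (SB \<alpha> Nr (real s) (JJ L) z) * exp (- \<alpha> * (Im z)^2 / 2) \<le> 1 + tau \<alpha> Nr"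
      by (rule SB_upper[OF a Nr1 finJ])
    moreover have "1 + tau \<alpha> Nr \<le> 2" using tau E0 by linarith
    ultimately have "HH p s L z \<le> 2 * 2" unfolding HH_fac
      by (intro mult_mono) auto
    thus ?thesis by simp
  qed
  have HH0: "HH p s L z \<ge> 0" for p s L z by (simp add: HH_def)
  have hol: "FF p s L holomorphic_on UNIV" for p s L
    unfolding FF_def SA_def SB_def by (intro holomorphic_intros)
  have mem: "FF p s L \<in> fock_inf \<alpha>" for p s L
    unfolding fock_inf_def using hol HH_le
    by (auto simp: bdd_above_def HH_def intro!: exI[of _ 4])
  have nrm: "fock_inf_norm \<alpha> (FF p s L) \<le> 4" for p s L
    unfolding fock_inf_norm_def using HH_le by (intro cSUP_least) (auto simp: HH_def)
  have int_bd: "(\<integral>\<^sup>+ z. ennreal (HH p s L z powr q) \<partial>\<mu>) \<le> ennreal ((4 * C) powr q)" for p s L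
  proof -
    let ?X = "\<integral>\<^sup>+ z. ennreal (HH p s L z powr q) \<partial>\<mu>"
    have X: "?X < \<infinity>" "enn2real ?X powr (1/q) \<le> C * fock_inf_norm \<alpha> (FF p s L)"
      using CF[OF mem[of p s L]] unfolding HH_def by auto
    have "C * fock_inf_norm \<alpha> (FF p s L) \<le> C * 4" using nrm[of p s L] C by (intro mult_left_mono) auto
    hence "enn2real ?X powr (1/q) \<le> 4 * C" using X(2) by linarith
    hence "enn2real ?X \<le> (4 * C) powr q" using q by (intro powr_inv_bound) auto
    moreover have "?X = ennreal (enn2real ?X)" using X(1) by (simp add: less_top)
    ultimately show ?thesis by (metis ennreal_leI)
  qed
  have meas: "(\<lambda>z. ennreal (HH p s L z powr q)) \<in> borel_measurable \<mu>" for p s L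
  proof -
    have "FF p s L \<in> borel_measurable borel"
      using hol by (intro borel_measurable_continuous_onI holomorphic_on_imp_continuous_on)
    note [measurable] = this
    have "(\<lambda>z. ennreal (HH p s L z powr q)) \<in> borel_measurable borel"
      unfolding HH_def by measurable
    thus ?thesis using measurable_cong_sets[OF S refl] by blast
  qed
  have good: "\<exists>p<Nn. \<exists>s<Nn. c \<le> HH p s (n+2) z" if z: "z \<in> ball 0 (real n)" for z n
  proof -
    have cz: "cmod z < real n" using z by simp
    have "\<bar>Re z\<bar> < real n" using abs_Re_le_cmod[of z] cz by linarith
    then obtain p j0 where p: "p < Nn" and j0: "j0 \<in> JJ (n+2)"
      and nx: "\<bar>Re z - (Nr * of_int j0 + real p)\<bar> \<le> 1/2"
      using near_grid[OF _ N1] unfolding JJ_def Nr_def by blast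
    have "\<bar>Im z\<bar> < real n" using abs_Im_le_cmod[of z] cz by linarith
    then obtain s l0 where s: "s < Nn" and l0: "l0 \<in> JJ (n+2)"
      and ny: "\<bar>Im z - (Nr * of_int l0 + real s)\<bar> \<le> 1/2"
      using near_grid[OF _ N1] unfolding JJ_def Nr_def by blast
    have A: "E0 / 2 \<le> norm (SA \<alpha> Nr (real p) (JJ (n+2)) z) * exp (- \<alpha> * (Re z)^2 / 2)"
      using SA_lower[OF a Nr1 finJ j0 nx] tau unfolding E0_def by linarith
    have B: "E0 / 2 \<le> norm (SB \<alpha> Nr (real s) (JJ (n+2)) z) * exp (- \<alpha> * (Im z)^2 / 2)"
      using SB_lower[OF a Nr1 finJ l0 ny] tau unfolding E0_def by linarith
    have "c \<le> HH p s (n+2) z" unfolding HH_fac c_def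
      using A B E0 by (intro mult_mono) auto
    thus ?thesis using p s by blast
  qed
  define K' where "K' = ennreal ((1/c) powr q)"
  have pt: "indicator (ball 0 (real n)) z \<le> (\<Sum>p<Nn. \<Sum>s<Nn. K' * ennreal (HH p s (n+2) z powr q))" for z n
  proof (cases "z \<in> ball 0 (real n)")
    case False thus ?thesis by simp
  next
    case True
    then obtain p s where p: "p < Nn" and s: "s < Nn" and cH: "c \<le> HH p s (n+2) z" using good by blast
    have "1 \<le> (1/c * HH p s (n+2) z) powr q"
      using cH c q by (intro ge_one_powr_ge_zero) (auto simp: field_simps)
    also have "\<dots> = (1/c) powr q * HH p s (n+2) z powr q"
      by (rule powr_mult)
    finally have "ennreal 1 \<le> ennreal ((1/c) powr q * HH p s (n+2) z powr q)" by (rule ennreal_leI)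
    also have "\<dots> = K' * ennreal (HH p s (n+2) z powr q)" unfolding K'_def by (simp add: ennreal_mult)
    also have "\<dots> \<le> (\<Sum>s'<Nn. K' * ennreal (HH p s' (n+2) z powr q))"
      using s by (intro member_le_sum) auto
    also have "\<dots> \<le> (\<Sum>p'<Nn. \<Sum>s'<Nn. K' * ennreal (HH p' s' (n+2) z powr q))"
      using p by (intro member_le_sum) auto
    finally show ?thesis using True by simp
  qed
  define Kb where "Kb = of_nat Nn * (of_nat Nn * (K' * ennreal ((4 * C) powr q)))"
  have Kb: "Kb < \<infinity>" unfolding Kb_def K'_def by (simp add: ennreal_mult_less_top of_nat_less_top)
  have ball_bd: "emeasure \<mu> (ball 0 (real n)) \<le> Kb" for n
  proof -
    have inner_m: "(\<lambda>z. K' * ennreal (HH p s (n+2) z powr q)) \<in> borel_measurable \<mu>" for p s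
      using meas[of p s "n+2"] by measurable
    have "emeasure \<mu> (ball 0 (real n)) = (\<integral>\<^sup>+ z. indicator (ball 0 (real n)) z \<partial>\<mu>)"
      using S by simp
    also have "\<dots> \<le> (\<integral>\<^sup>+ z. (\<Sum>p<Nn. \<Sum>s<Nn. K' * ennreal (HH p s (n+2) z powr q)) \<partial>\<mu>)"
      by (intro nn_integral_mono pt)
    also have "\<dots> = (\<Sum>p<Nn. \<integral>\<^sup>+ z. (\<Sum>s<Nn. K' * ennreal (HH p s (n+2) z powr q)) \<partial>\<mu>)"
      by (rule nn_integral_sum) (use inner_m in measurable)
    also have "\<dots> = (\<Sum>p<Nn. \<Sum>s<Nn. \<integral>\<^sup>+ z. K' * ennreal (HH p s (n+2) z powr q) \<partial>\<mu>)"
      by (intro sum.cong refl nn_integral_sum inner_m)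
    also have "\<dots> = (\<Sum>p<Nn. \<Sum>s<Nn. K' * \<integral>\<^sup>+ z. ennreal (HH p s (n+2) z powr q) \<partial>\<mu>)"
      by (intro sum.cong refl nn_integral_cmult meas)
    also have "\<dots> \<le> (\<Sum>p<Nn. \<Sum>s<Nn. K' * ennreal ((4 * C) powr q))"
      by (intro sum_mono mult_left_mono int_bd) auto
    also have "\<dots> = Kb" by (simp add: Kb_def)
    finally show ?thesis .
  qed
  have inc: "incseq (\<lambda>n::nat. ball (0::complex) (real n))"
    by (intro incseq_SucI subset_ball) simp
  have U: "(\<Union>n::nat. ball (0::complex) (real n)) = UNIV"
  proof (intro set_eqI iffI)
    fix z :: complex
    obtain n :: nat where "cmod z < real n" using reals_Archimedean2 by blast
    thus "z \<in> (\<Union>n::nat. ball 0 (real n))" by auto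
  qed auto
  have "emeasure \<mu> UNIV = (SUP n. emeasure \<mu> (ball 0 (real n)))"
  proof -
    have r: "range (\<lambda>n::nat. ball (0::complex) (real n)) \<subseteq> sets \<mu>" unfolding S by auto
    show ?thesis using SUP_emeasure_incseq[OF r inc] U by simp
  qed
  also have "\<dots> \<le> Kb" by (intro SUP_least ball_bd)
  finally show ?thesis using Kb by (rule le_less_trans)
qed


theorem theorem2p6:
  fixes \<alpha> q r :: real and \<mu> :: "complex measure" and a :: "nat \<Rightarrow> complex"
  assumes "\<alpha> > 0" and "q > 0" and "r > 0"
    and "sets \<mu> = sets borel"
    and "r_lattice r a"
  shows "(fock_carleson_inf \<alpha> q \<mu> \<longleftrightarrow>
           (\<forall>t>0. (\<integral>\<^sup>+ z. berezin \<alpha> t \<mu> z \<partial>lborel) < \<infinity>))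
       \<and> ((\<forall>t>0. (\<integral>\<^sup>+ z. berezin \<alpha> t \<mu> z \<partial>lborel) < \<infinity>) \<longleftrightarrow>
           (\<integral>\<^sup>+ z. emeasure \<mu> (ball z r) \<partial>lborel) < \<infinity>)
       \<and> ((\<integral>\<^sup>+ z. emeasure \<mu> (ball z r) \<partial>lborel) < \<infinity> \<longleftrightarrow>
           (\<Sum>k. emeasure \<mu> (ball (a k) r)) < \<infinity>)"
proof -
  note a = assms(1) and q = assms(2) and r = assms(3) and S = assms(4) and L = assms(5)
  have e1: "fock_carleson_inf \<alpha> q \<mu> \<longleftrightarrow> emeasure \<mu> UNIV < \<infinity>"
    using carleson_imp_finite[OF S a q] finite_imp_carleson[OF S q] by blast
  have e2: "(\<forall>t>0. (\<integral>\<^sup>+ z. berezin \<alpha> t \<mu> z \<partial>lborel) < \<infinity>) \<longleftrightarrow> emeasure \<mu> UNIV < \<infinity>"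
  proof
    assume "\<forall>t>0. (\<integral>\<^sup>+ z. berezin \<alpha> t \<mu> z \<partial>lborel) < \<infinity>"
    hence "(\<integral>\<^sup>+ z. berezin \<alpha> 1 \<mu> z \<partial>lborel) < \<infinity>" by simp
    hence "(\<integral>\<^sup>+ z. emeasure \<mu> (ball z r) \<partial>lborel) < \<infinity>" by (rule berezin_imp_balls[OF S a r])
    thus "emeasure \<mu> UNIV < \<infinity>" by (rule balls_imp_finite[OF S r])
  next
    assume "emeasure \<mu> UNIV < \<infinity>"
    thus "\<forall>t>0. (\<integral>\<^sup>+ z. berezin \<alpha> t \<mu> z \<partial>lborel) < \<infinity>"
      using finite_imp_berezin[OF S a] by blast
  qed
  have e3: "(\<integral>\<^sup>+ z. emeasure \<mu> (ball z r) \<partial>lborel) < \<infinity> \<longleftrightarrow> emeasure \<mu> UNIV < \<infinity>"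
    using balls_imp_finite[OF S r] finite_imp_balls[OF S] r by auto
  have e4: "(\<Sum>k. emeasure \<mu> (ball (a k) r)) < \<infinity> \<longleftrightarrow> emeasure \<mu> UNIV < \<infinity>"
    by (rule lattice_equiv[OF S L r])
  show ?thesis using e1 e2 e3 e4 by blast
qed

end
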